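(* There exist natural numbers $B_0,B_1,B_2,\dots$ such that for every finite set $\Omega$, every algebra $\Sigma$ of subsets of $\Omega$, and every function $\upsilon:\Sigma\to\mathbb{R}$, there exists a set $\mathcal{P}$ of probability measures on $\Sigma$ with $\upsilon(X)=\sup\{\mu(X):\mu\in\mathcal{P}\}$ for all $X\in\Sigma$ if and only if $\upsilon$ satisfies: (UPF1) $\upsilon(\emptyset)=0$; (UPF2) $\upsilon(\Omega)=1$; (UPF3) for all natural numbers $m,n,k\le B_{|\Omega|}$ and all $A,A_1,\dots,A_m\in\Sigma$, if the multiset $\{\!\{A_1,\dots,A_m\}\!\}$ is an $(n,k)$-cover of $(A,\Omega)$, then $k+n\,\upsilon(A)\le\sum_{i=1}^m\upsilon(A_i)$.
   Context: A probability measure on an algebra $\Sigma$ of subsets of $\Omega$ is a finitely additive $\mu:\Sigma\to[0,1]$ with $\mu(\emptyset)=0,\mu(\Omega)=1$. A multiset $\{\!\{A_1,\dots,A_m\}\!\}$ of subsets (not necessarily distinct) covers a set $X$ $n$ times if every $x\in X$ belongs to $A_i$ for at least $n$ distinct indices $i\in\{1,\dots,m\}$. It is an $(n,k)$-cover of $(A,\Omega)$ if it covers $\Omega$ $k$ times and covers $A$ $n+k$ times. *)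

theory Defs
  imports "HOL-Analysis.Analysis"
begin

text \<open>Only values on \<Sigma> matter.\<close>
definition prob_measure_on :: "'a set \<Rightarrow> 'a set set \<Rightarrow> ('a set \<Rightarrow> real) \<Rightarrow> bool" where
  "prob_measure_on \<Omega> \<Sigma> \<mu> \<longleftrightarrow>
     (\<forall>X\<in>\<Sigma>. 0 \<le> \<mu> X \<and> \<mu> X \<le> 1) \<and>
     (\<forall>X\<in>\<Sigma>. \<forall>Y\<in>\<Sigma>. X \<inter> Y = {} \<longrightarrow> \<mu> (X \<union> Y) = \<mu> X + \<mu> Y) \<and>
     \<mu> {} = 0 \<and> \<mu> \<Omega> = 1"

definition covers_times :: "nat \<Rightarrow> (nat \<Rightarrow> 'a set) \<Rightarrow> 'a set \<Rightarrow> nat \<Rightarrow> bool" where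
  "covers_times m A X n \<longleftrightarrow> (\<forall>x\<in>X. n \<le> card {i\<in>{1..m}. x \<in> A i})"

definition nk_cover :: "nat \<Rightarrow> nat \<Rightarrow> nat \<Rightarrow> (nat \<Rightarrow> 'a set) \<Rightarrow> 'a set \<Rightarrow> 'a set \<Rightarrow> bool" where
  "nk_cover n k m A B \<Omega> \<longleftrightarrow> covers_times m A \<Omega> k \<and> covers_times m A B (n + k)"

end

theory Submission
  imports Defs
begin


definition fm_coef :: "'j set \<Rightarrow> ('j \<Rightarrow> nat \<Rightarrow> int) \<Rightarrow> ('j \<Rightarrow> nat) \<Rightarrow> nat \<Rightarrow> int" where
  "fm_coef J rw l i = (\<Sum>j\<in>J. int (l j) * rw j i)"
definition fm_rhs :: "'j set \<Rightarrow> ('j \<Rightarrow> real) \<Rightarrow> ('j \<Rightarrow> nat) \<Rightarrow> real" where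
  "fm_rhs J b l = (\<Sum>j\<in>J. real (l j) * b j)"
definition fm_lhs :: "'j set \<Rightarrow> ('j \<Rightarrow> nat \<Rightarrow> int) \<Rightarrow> nat set \<Rightarrow> ('j \<Rightarrow> nat) \<Rightarrow> (nat \<Rightarrow> real) \<Rightarrow> real" where
  "fm_lhs J rw V l p = (\<Sum>i\<in>V. real_of_int (fm_coef J rw l i) * p i)"

fun fmF :: "nat \<Rightarrow> nat \<Rightarrow> nat" where
  "fmF 0 K = K" | "fmF (Suc v) K = fmF v (2*K*K)"

lemma fm_coef_lin: "fm_coef J rw (\<lambda>j. a * l j + c * u j) i = int a * fm_coef J rw l i + int c * fm_coef J rw u i"
  unfolding fm_coef_def by (simp add: sum.distrib sum_distrib_left algebra_simps)

lemma fm_rhs_lin: "fm_rhs J b (\<lambda>j. a * l j + c * u j) = real a * fm_rhs J b l + real c * fm_rhs J b u"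
  unfolding fm_rhs_def by (simp add: sum.distrib sum_distrib_left algebra_simps)

lemma fm_lhs_lin: "fm_lhs J rw V (\<lambda>j. a * l j + c * u j) p = real a * fm_lhs J rw V l p + real c * fm_lhs J rw V u p"
  unfolding fm_lhs_def fm_coef_lin by (simp add: sum.distrib sum_distrib_left algebra_simps)

lemma fm_lhs_insert: "finite V \<Longrightarrow> x \<notin> V \<Longrightarrow>
  fm_lhs J rw (insert x V) l p = real_of_int (fm_coef J rw l x) * p x + fm_lhs J rw V l p"
  unfolding fm_lhs_def by simp

lemma fm_lhs_upd: "x \<notin> V \<Longrightarrow> fm_lhs J rw V l (p(x:=t)) = fm_lhs J rw V l p"
  unfolding fm_lhs_def by (intro sum.cong) auto

lemma fm_real:
  fixes c d r :: "'a \<Rightarrow> real"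
  assumes "finite S"
  and A0: "\<forall>l\<in>S. c l = 0 \<longrightarrow> d l \<le> r l"
  and A1: "\<forall>l\<in>S. \<forall>u\<in>S. c l > 0 \<longrightarrow> c u < 0 \<longrightarrow> (- c u) * d l + c l * d u \<le> (- c u) * r l + c l * r u"
  shows "\<exists>t. \<forall>l\<in>S. c l * t + d l \<le> r l"
proof -
  define Sp where "Sp = {l\<in>S. c l > 0}"
  define Sn where "Sn = {l\<in>S. c l < 0}"
  define up where "up l = (r l - d l) / c l" for l
  have fin: "finite Sp" "finite Sn" using assms(1) by (auto simp: Sp_def Sn_def)
  have key: "up u \<le> up l" if "l\<in>Sp" "u\<in>Sn" for l u
  proof -
    have cl: "c l > 0" "l \<in> S" using that by (auto simp: Sp_def)
    have cu: "c u < 0" "u \<in> S" using that by (auto simp: Sn_def)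
    have h: "0 \<le> (- c u) * (r l - d l) + c l * (r u - d u)"
      using A1 cl cu by (auto simp: algebra_simps)
    have "up l - up u = ((- c u) * (r l - d l) + c l * (r u - d u)) / (c l * (- c u))"
      using cl cu mult_pos_neg[of "c l" "c u"] unfolding up_def by (simp add: field_simps)
    also have "\<dots> \<ge> 0" using h cl cu mult_pos_neg[of "c l" "c u"] by (intro divide_nonneg_pos) auto
    finally show ?thesis by simp
  qed
  define t where "t = (if Sp = {} then (if Sn = {} then 0 else Max (up ` Sn)) else Min (up ` Sp))"
  have tp: "t \<le> up l" if "l \<in> Sp" for l
  proof -
    have "Sp \<noteq> {}" using that by auto
    then show ?thesis using that fin by (simp add: t_def)
  qed
  have tn: "up u \<le> t" if "u \<in> Sn" for u
  proof (cases "Sp = {}")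
    case True
    then show ?thesis using that fin by (auto simp: t_def)
  next
    case False
    then obtain l where "l \<in> Sp" by auto
    then show ?thesis using that fin False key by (auto simp: t_def intro!: Min.boundedI)
  qed
  show ?thesis
  proof (intro exI ballI)
    fix l assume l: "l \<in> S"
    consider "c l = 0" | "c l > 0" | "c l < 0" by linarith
    then show "c l * t + d l \<le> r l"
    proof cases
      case 1 then show ?thesis using A0 l by simp
    next
      case 2
      then have "l \<in> Sp" using l by (simp add: Sp_def)
      then have "t \<le> (r l - d l) / c l" using tp by (simp add: up_def)
      then have "t * c l \<le> r l - d l" using 2 by (simp add: pos_le_divide_eq)
      then show ?thesis by (simp add: algebra_simps)
    next
      case 3
      then have "l \<in> Sn" using l by (simp add: Sn_def)
      then have "(r l - d l) / c l \<le> t" using tn by (simp add: up_def)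
      then have "t * c l \<le> r l - d l" using 3 by (simp add: neg_divide_le_eq)
      then show ?thesis by (simp add: algebra_simps)
    qed
  qed
qed

lemma fm_real2:
  fixes cl cu dl du rl ru t :: real
  assumes "cl * t + dl \<le> rl" "cu * t + du \<le> ru" "cl > 0" "cu < 0"
  shows "(- cu) * dl + cl * du \<le> (- cu) * rl + cl * ru"
proof -
  have "(- cu) * (cl * t + dl) \<le> (- cu) * rl" using assms by (intro mult_left_mono) auto
  moreover have "cl * (cu * t + du) \<le> cl * ru" using assms by (intro mult_left_mono) auto
  ultimately show ?thesis by (simp add: algebra_simps)
qed

definition fm_cmb :: "'j set \<Rightarrow> ('j \<Rightarrow> nat \<Rightarrow> int) \<Rightarrow> nat \<Rightarrow> ('j \<Rightarrow> nat) \<Rightarrow> ('j \<Rightarrow> nat) \<Rightarrow> 'j \<Rightarrow> nat" where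
  "fm_cmb J rw x l u = (\<lambda>j. nat (- fm_coef J rw u x) * l j + nat (fm_coef J rw l x) * u j)"

lemma fm_main:
  assumes "finite V"
  shows "\<And>S K. finite S \<Longrightarrow> (\<forall>l\<in>S. \<forall>i. i \<notin> V \<longrightarrow> fm_coef J rw l i = 0) \<Longrightarrow>
    (\<forall>l\<in>S. \<forall>j. l j \<le> K) \<Longrightarrow> (\<forall>l\<in>S. \<forall>i. \<bar>fm_coef J rw l i\<bar> \<le> int K) \<Longrightarrow>
    \<exists>L. (\<forall>l\<in>L. (\<forall>i. fm_coef J rw l i = 0) \<and> (\<forall>j. l j \<le> fmF (card V) K)) \<and>
      (\<forall>b. (\<exists>p. \<forall>l\<in>S. fm_lhs J rw V l p \<le> fm_rhs J b l) \<longleftrightarrow> (\<forall>l\<in>L. 0 \<le> fm_rhs J b l))"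
  using assms
proof (induction V rule: finite_induct)
  case empty
  show ?case
    by (rule exI[of _ S]) (use empty in \<open>auto simp: fm_lhs_def\<close>)
next
  case (insert x V)
  let ?c = "\<lambda>l. fm_coef J rw l x"
  define S0 where "S0 = {l\<in>S. ?c l = 0}"
  define Sp where "Sp = {l\<in>S. ?c l > 0}"
  define Sn where "Sn = {l\<in>S. ?c l < 0}"
  define S' where "S' = S0 \<union> (\<lambda>(l,u). fm_cmb J rw x l u) ` (Sp \<times> Sn)"
  have finS': "finite S'" using insert.prems(1) by (auto simp: S'_def S0_def Sp_def Sn_def)
  have cmb_coef: "fm_coef J rw (fm_cmb J rw x l u) i = int (nat (- ?c u)) * fm_coef J rw l i + int (nat (?c l)) * fm_coef J rw u i" for l u i
    unfolding fm_cmb_def by (rule fm_coef_lin)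
  have z: "\<forall>l\<in>S'. \<forall>i. i \<notin> V \<longrightarrow> fm_coef J rw l i = 0"
  proof (intro ballI allI impI)
    fix l i assume l: "l \<in> S'" and i: "i \<notin> V"
    show "fm_coef J rw l i = 0"
    proof (cases "l \<in> S0")
      case True
      then show ?thesis using insert.prems(2) i by (cases "i = x") (auto simp: S0_def)
    next
      case False
      then obtain a u where au: "a \<in> Sp" "u \<in> Sn" "l = fm_cmb J rw x a u" using l by (auto simp: S'_def)
      show ?thesis
      proof (cases "i = x")
        case True
        then show ?thesis using au by (simp add: cmb_coef Sp_def Sn_def)
      next
        case False
        then show ?thesis using au insert.prems(2) i by (auto simp: cmb_coef Sp_def Sn_def)
      qed
    qed
  qed
  have KK: "K \<le> 2*K*K" by (cases K) auto
  have bd1: "\<forall>l\<in>S'. \<forall>j. l j \<le> 2*K*K"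
  proof (intro ballI allI)
    fix l j assume l: "l \<in> S'"
    show "l j \<le> 2*K*K"
    proof (cases "l \<in> S0")
      case True
      then have "l j \<le> K" using insert.prems(3) by (auto simp: S0_def)
      then show ?thesis using KK by linarith
    next
      case False
      then obtain a u where au: "a \<in> Sp" "u \<in> Sn" "l = fm_cmb J rw x a u" using l by (auto simp: S'_def)
      have "a \<in> S" "u \<in> S" using au by (auto simp: Sp_def Sn_def)
      then have h: "nat (- ?c u) \<le> K" "nat (?c a) \<le> K" "a j \<le> K" "u j \<le> K"
        using insert.prems(3,4) by (auto simp: abs_le_iff nat_le_iff)
      have "l j = nat (- ?c u) * a j + nat (?c a) * u j" using au by (simp add: fm_cmb_def)
      also have "\<dots> \<le> K * K + K * K" using h by (intro add_mono mult_mono) auto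
      finally show ?thesis by simp
    qed
  qed
  have bd2: "\<forall>l\<in>S'. \<forall>i. \<bar>fm_coef J rw l i\<bar> \<le> int (2*K*K)"
  proof (intro ballI allI)
    fix l i assume l: "l \<in> S'"
    show "\<bar>fm_coef J rw l i\<bar> \<le> int (2*K*K)"
    proof (cases "l \<in> S0")
      case True
      then have "\<bar>fm_coef J rw l i\<bar> \<le> int K" using insert.prems(4) by (auto simp: S0_def)
      moreover have "int K \<le> int (2*K*K)" using KK by linarith
      ultimately show ?thesis by linarith
    next
      case False
      then obtain a u where au: "a \<in> Sp" "u \<in> Sn" "l = fm_cmb J rw x a u" using l by (auto simp: S'_def)
      have "a \<in> S" "u \<in> S" using au by (auto simp: Sp_def Sn_def)
      then have h: "\<bar>int (nat (- ?c u))\<bar> \<le> int K" "\<bar>int (nat (?c a))\<bar> \<le> int K" "\<bar>fm_coef J rw a i\<bar> \<le> int K" "\<bar>fm_coef J rw u i\<bar> \<le> int K"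
        using insert.prems(4) by (auto simp: abs_le_iff)
      have "\<bar>fm_coef J rw l i\<bar> \<le> \<bar>int (nat (- ?c u)) * fm_coef J rw a i\<bar> + \<bar>int (nat (?c a)) * fm_coef J rw u i\<bar>"
        using au by (simp add: cmb_coef abs_triangle_ineq)
      also have "\<dots> \<le> int K * int K + int K * int K" unfolding abs_mult
        using h by (intro add_mono mult_mono) auto
      finally show ?thesis by simp
    qed
  qed
  obtain L where L: "\<forall>l\<in>L. (\<forall>i. fm_coef J rw l i = 0) \<and> (\<forall>j. l j \<le> fmF (card V) (2*K*K))"
    and Leq: "\<And>b. (\<exists>p. \<forall>l\<in>S'. fm_lhs J rw V l p \<le> fm_rhs J b l) \<longleftrightarrow> (\<forall>l\<in>L. 0 \<le> fm_rhs J b l)"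
    using insert.IH[OF finS' z bd1 bd2] by blast
  have eqv: "(\<exists>p. \<forall>l\<in>S. fm_lhs J rw (insert x V) l p \<le> fm_rhs J b l) \<longleftrightarrow> (\<exists>p. \<forall>l\<in>S'. fm_lhs J rw V l p \<le> fm_rhs J b l)" for b
  proof
    assume "\<exists>p. \<forall>l\<in>S. fm_lhs J rw (insert x V) l p \<le> fm_rhs J b l"
    then obtain p where p: "\<forall>l\<in>S. real_of_int (?c l) * p x + fm_lhs J rw V l p \<le> fm_rhs J b l"
      using fm_lhs_insert[OF insert.hyps] by metis
    show "\<exists>p. \<forall>l\<in>S'. fm_lhs J rw V l p \<le> fm_rhs J b l"
    proof (intro exI ballI)
      fix l assume l: "l \<in> S'"
      show "fm_lhs J rw V l p \<le> fm_rhs J b l"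
      proof (cases "l \<in> S0")
        case True
        then show ?thesis using p by (auto simp: S0_def)
      next
        case False
        then obtain a u where au: "a \<in> Sp" "u \<in> Sn" "l = fm_cmb J rw x a u" using l by (auto simp: S'_def)
        have pos: "?c a > 0" "?c u < 0" "a \<in> S" "u \<in> S" using au by (auto simp: Sp_def Sn_def)
        have "(- real_of_int (?c u)) * fm_lhs J rw V a p + real_of_int (?c a) * fm_lhs J rw V u p
             \<le> (- real_of_int (?c u)) * fm_rhs J b a + real_of_int (?c a) * fm_rhs J b u"
          by (rule fm_real2[where t = "p x"]) (use p pos in auto)
        then show ?thesis using au pos
          by (simp add: fm_cmb_def fm_lhs_lin fm_rhs_lin)
      qed
    qed
  next
    assume "\<exists>p. \<forall>l\<in>S'. fm_lhs J rw V l p \<le> fm_rhs J b l"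
    then obtain p where p: "\<forall>l\<in>S'. fm_lhs J rw V l p \<le> fm_rhs J b l" by blast
    have "\<exists>t. \<forall>l\<in>S. real_of_int (?c l) * t + fm_lhs J rw V l p \<le> fm_rhs J b l"
    proof (rule fm_real[OF insert.prems(1)])
      show "\<forall>l\<in>S. real_of_int (?c l) = 0 \<longrightarrow> fm_lhs J rw V l p \<le> fm_rhs J b l"
        using p by (auto simp: S'_def S0_def)
      show "\<forall>l\<in>S. \<forall>u\<in>S. real_of_int (?c l) > 0 \<longrightarrow> real_of_int (?c u) < 0 \<longrightarrow>
        (- real_of_int (?c u)) * fm_lhs J rw V l p + real_of_int (?c l) * fm_lhs J rw V u p
        \<le> (- real_of_int (?c u)) * fm_rhs J b l + real_of_int (?c l) * fm_rhs J b u"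
      proof (intro ballI impI)
        fix l u assume lu: "l \<in> S" "u \<in> S" "real_of_int (?c l) > 0" "real_of_int (?c u) < 0"
        then have "fm_cmb J rw x l u \<in> S'" by (auto simp: S'_def Sp_def Sn_def)
        then have "fm_lhs J rw V (fm_cmb J rw x l u) p \<le> fm_rhs J b (fm_cmb J rw x l u)" using p by blast
        then show "(- real_of_int (?c u)) * fm_lhs J rw V l p + real_of_int (?c l) * fm_lhs J rw V u p
        \<le> (- real_of_int (?c u)) * fm_rhs J b l + real_of_int (?c l) * fm_rhs J b u"
          using lu by (simp add: fm_cmb_def fm_lhs_lin fm_rhs_lin)
      qed
    qed
    then obtain t where t: "\<forall>l\<in>S. real_of_int (?c l) * t + fm_lhs J rw V l p \<le> fm_rhs J b l" by blast
    show "\<exists>p. \<forall>l\<in>S. fm_lhs J rw (insert x V) l p \<le> fm_rhs J b l"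
      by (rule exI[of _ "p(x:=t)"]) (use t insert.hyps in \<open>simp add: fm_lhs_insert fm_lhs_upd\<close>)
  qed
  show ?case
    by (rule exI[of _ L]) (use L Leq eqv insert.hyps in auto)
qed


lemma enum_aux:
  fixes g :: "'a \<Rightarrow> real"
  shows "sum_list (map g (concat (map (\<lambda>X. replicate (f X) X) xs))) = sum_list (map (\<lambda>X. real (f X) * g X) xs)"
    and "length (filter P (concat (map (\<lambda>X. replicate (f X) X) xs))) = sum_list (map (\<lambda>X. if P X then f X else 0) xs)"
    and "length (concat (map (\<lambda>X. replicate (f X) X) xs)) = sum_list (map f xs)"
    and "set (concat (map (\<lambda>X. replicate (f X) X) xs)) \<subseteq> set xs"
  by (induction xs) (auto simp: sum_list_replicate filter_replicate)

lemma enum_multiset: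
  fixes f :: "'a \<Rightarrow> nat"
  assumes "finite T"
  shows "\<exists>As m. m = (\<Sum>X\<in>T. f X) \<and> (\<forall>i\<in>{1..m}. As i \<in> T) \<and>
     (\<forall>g::'a\<Rightarrow>real. (\<Sum>i=1..m. g (As i)) = (\<Sum>X\<in>T. real (f X) * g X)) \<and>
     (\<forall>P. card {i\<in>{1..m}. P (As i)} = (\<Sum>X\<in>{X\<in>T. P X}. f X))"
proof -
  obtain xs where xs: "set xs = T" "distinct xs" using finite_distinct_list[OF assms] by blast
  define ys where "ys = concat (map (\<lambda>X. replicate (f X) X) xs)"
  define As where "As i = ys ! (i - 1)" for i
  have sh: "{1..length ys} = Suc ` {..<length ys}" by (simp add: image_Suc_lessThan)
  show ?thesis
  proof (intro exI conjI allI ballI)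
    show "length ys = (\<Sum>X\<in>T. f X)"
      using enum_aux(3)[of f xs] xs by (simp add: ys_def sum_list_distinct_conv_sum_set)
    fix i assume "i \<in> {1..length ys}"
    then have "ys ! (i - 1) \<in> set ys" by auto
    then show "As i \<in> T" using enum_aux(4)[of f xs] xs by (auto simp: As_def ys_def)
  next
    fix g :: "'a \<Rightarrow> real"
    have "(\<Sum>i=1..length ys. g (As i)) = (\<Sum>i<length ys. g (ys ! i))"
      unfolding sh by (subst sum.reindex) (auto simp: As_def)
    also have "\<dots> = sum_list (map g ys)"
      by (simp add: sum_list_sum_nth atLeast0LessThan)
    also have "\<dots> = (\<Sum>X\<in>T. real (f X) * g X)"
      using enum_aux(1)[of g f xs] xs by (simp add: ys_def sum_list_distinct_conv_sum_set)
    finally show "(\<Sum>i=1..length ys. g (As i)) = (\<Sum>X\<in>T. real (f X) * g X)" .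
  next
    fix P
    have "{i\<in>{1..length ys}. P (As i)} = Suc ` {i. i < length ys \<and> P (ys ! i)}"
    proof
      show "{i\<in>{1..length ys}. P (As i)} \<subseteq> Suc ` {i. i < length ys \<and> P (ys ! i)}"
      proof
        fix i assume "i \<in> {i\<in>{1..length ys}. P (As i)}"
        then show "i \<in> Suc ` {i. i < length ys \<and> P (ys ! i)}"
          by (intro image_eqI[of _ _ "i - 1"]) (auto simp: As_def)
      qed
      show "Suc ` {i. i < length ys \<and> P (ys ! i)} \<subseteq> {i\<in>{1..length ys}. P (As i)}"
        by (auto simp: As_def)
    qed
    then have "card {i\<in>{1..length ys}. P (As i)} = card {i. i < length ys \<and> P (ys ! i)}"
      by (simp add: card_image)
    also have "\<dots> = length (filter P ys)" by (simp add: length_filter_conv_card)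
    also have "\<dots> = sum_list (map (\<lambda>X. if P X then f X else 0) xs)" using enum_aux(2) by (simp add: ys_def)
    also have "\<dots> = (\<Sum>X\<in>T. if P X then f X else 0)" using xs by (simp add: sum_list_distinct_conv_sum_set)
    also have "\<dots> = (\<Sum>X\<in>{X\<in>T. P X}. f X)" using assms by (simp add: sum.inter_filter)
    finally show "card {i\<in>{1..length ys}. P (As i)} = (\<Sum>X\<in>{X\<in>T. P X}. f X)" .
  qed
qed

lemma atoms_weights:
  assumes alg: "algebra \<Omega> \<Sigma>" and fin: "finite \<Omega>" and mu: "prob_measure_on \<Omega> \<Sigma> \<mu>"
  shows "\<exists>w. (\<forall>x\<in>\<Omega>. 0 \<le> w x) \<and> (\<forall>X\<in>\<Sigma>. \<mu> X = (\<Sum>x\<in>X. w x))"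
proof -
  interpret algebra \<Omega> \<Sigma> by fact
  have sub: "\<Sigma> \<subseteq> Pow \<Omega>" using sets_into_space by auto
  have finS: "finite \<Sigma>" using sub fin by (meson finite_Pow_iff finite_subset)
  define atm where "atm x = (\<Inter>X\<in>{X\<in>\<Sigma>. x\<in>X}. X)" for x
  have at_in: "atm x \<in> \<Sigma>" if "x \<in> \<Omega>" for x
    unfolding atm_def using that finS by (intro finite_INT) auto
  have at_mem: "x \<in> atm x" for x by (auto simp: atm_def)
  have at_sub: "atm x \<subseteq> X" if "X \<in> \<Sigma>" "x \<in> X" for X x using that by (auto simp: atm_def)
  have at_eq: "atm y = atm x" if "x \<in> \<Omega>" "y \<in> atm x" for x y
  proof -
    have y: "y \<in> \<Omega>" using that at_in sets_into_space by blast
    have 1: "atm y \<subseteq> atm x" using at_sub[OF at_in[OF that(1)] that(2)] .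
    have "x \<in> atm y"
    proof (rule ccontr)
      assume "x \<notin> atm y"
      then have "atm x - atm y \<in> \<Sigma>" "x \<in> atm x - atm y" using at_in that y at_mem by auto
      then have "atm x \<subseteq> atm x - atm y" using at_sub by blast
      then show False using that(2) at_mem[of y] by blast
    qed
    then have "atm x \<subseteq> atm y" using at_sub[OF at_in[OF y]] by blast
    then show ?thesis using 1 by blast
  qed
  have mu0: "\<forall>X\<in>\<Sigma>. 0 \<le> \<mu> X" "\<mu> {} = 0"
    and muadd: "\<And>X Y. X \<in> \<Sigma> \<Longrightarrow> Y \<in> \<Sigma> \<Longrightarrow> X \<inter> Y = {} \<Longrightarrow> \<mu> (X \<union> Y) = \<mu> X + \<mu> Y"
    using mu by (auto simp: prob_measure_on_def)
  define w where "w x = \<mu> (atm x) / real (card (atm x))" for x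
  have "\<forall>x\<in>\<Omega>. 0 \<le> w x" using mu0 at_in by (auto simp: w_def)
  moreover have "\<mu> X = (\<Sum>x\<in>X. w x)" if "X \<in> \<Sigma>" for X
    using that
  proof (induction "card X" arbitrary: X rule: less_induct)
    case less
    show ?case
    proof (cases "X = {}")
      case True then show ?thesis using mu0 by simp
    next
      case False
      then obtain x where x: "x \<in> X" by auto
      have XO: "X \<subseteq> \<Omega>" using less.prems sets_into_space by auto
      have xO: "x \<in> \<Omega>" using x XO by auto
      have finX: "finite X" using XO fin finite_subset by auto
      have ax: "atm x \<in> \<Sigma>" "atm x \<subseteq> X" using at_in[OF xO] at_sub[OF less.prems x] by auto
      define Y where "Y = X - atm x"
      have Y: "Y \<in> \<Sigma>" using ax less.prems by (auto simp: Y_def)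
      have cY: "card Y < card X" unfolding Y_def using finX x at_mem[of x]
        by (intro psubset_card_mono) auto
      have XY: "X = atm x \<union> Y" "atm x \<inter> Y = {}" using ax by (auto simp: Y_def)
      have finA: "finite (atm x)" using ax finX finite_subset by auto
      have cA: "card (atm x) > 0" using finA at_mem[of x] card_gt_0_iff by blast
      have sA: "(\<Sum>y\<in>atm x. w y) = \<mu> (atm x)"
      proof -
        have "(\<Sum>y\<in>atm x. w y) = (\<Sum>y\<in>atm x. \<mu> (atm x) / real (card (atm x)))"
          using at_eq[OF xO] by (intro sum.cong) (auto simp: w_def)
        then show ?thesis using cA by simp
      qed
      have "\<mu> X = \<mu> (atm x) + \<mu> Y" using muadd[OF ax(1) Y XY(2)] XY(1) by simp
      also have "\<mu> Y = (\<Sum>y\<in>Y. w y)" using less.hyps[OF cY Y] .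
      also have "\<mu> (atm x) + (\<Sum>y\<in>Y. w y) = (\<Sum>y\<in>X. w y)"
        using sA ax(2) finX by (simp add: sum.subset_diff[of "atm x" X] Y_def)
      finally show ?thesis .
    qed
  qed
  ultimately show ?thesis by blast
qed

lemma weight_cover:
  assumes fin: "finite \<Omega>" and w0: "\<forall>x\<in>\<Omega>. 0 \<le> w x" and w1: "(\<Sum>x\<in>\<Omega>. w x) = 1" and A: "A \<subseteq> \<Omega>"
    and As: "\<forall>i\<in>{1..m}. As i \<subseteq> \<Omega>" and cov: "nk_cover n k m As A \<Omega>"
  shows "real k + real n * (\<Sum>x\<in>A. w x) \<le> (\<Sum>i=1..m. \<Sum>x\<in>As i. w x)"
proof -
  have cnt: "real k + real n * (if x \<in> A then 1 else 0) \<le> real (card {i\<in>{1..m}. x \<in> As i})" if "x \<in> \<Omega>" for x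
    using cov that unfolding nk_cover_def covers_times_def by auto
  have "real k + real n * (\<Sum>x\<in>A. w x) = (\<Sum>x\<in>\<Omega>. w x * (real k + real n * (if x \<in> A then 1 else 0)))"
  proof -
    have "(\<Sum>x\<in>A. w x) = (\<Sum>x\<in>\<Omega>. if x \<in> A then w x else 0)"
      using A fin by (simp add: sum.inter_restrict[symmetric] Int_absorb1)
    moreover have "(\<Sum>x\<in>\<Omega>. w x * (real k + real n * (if x \<in> A then 1 else 0)))
       = (\<Sum>x\<in>\<Omega>. real k * w x + real n * (if x \<in> A then w x else 0))"
      by (intro sum.cong) (auto simp: algebra_simps)
    ultimately show ?thesis using w1
      by (simp add: sum.distrib sum_distrib_left[symmetric])
  qed
  also have "\<dots> \<le> (\<Sum>x\<in>\<Omega>. w x * real (card {i\<in>{1..m}. x \<in> As i}))"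
    using w0 cnt by (intro sum_mono mult_left_mono) auto
  also have "\<dots> = (\<Sum>x\<in>\<Omega>. \<Sum>i=1..m. if x \<in> As i then w x else 0)"
    by (simp add: sum.inter_filter[symmetric] mult.commute)
  also have "\<dots> = (\<Sum>i=1..m. \<Sum>x\<in>\<Omega>. if x \<in> As i then w x else 0)" by (rule sum.swap)
  also have "\<dots> = (\<Sum>i=1..m. \<Sum>x\<in>As i. w x)"
  proof (rule sum.cong[OF refl])
    fix i assume "i \<in> {1..m}"
    then have "\<Omega> \<inter> As i = As i" using As by auto
    then show "(\<Sum>x\<in>\<Omega>. if x \<in> As i then w x else 0) = (\<Sum>x\<in>As i. w x)"
      using sum.inter_restrict[OF fin, of w "As i"] by simp
  qed
  finally show ?thesis .
qed



datatype cn = CX "nat set" | CA | CO | CP nat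

fun crw :: "nat set \<Rightarrow> nat set \<Rightarrow> cn \<Rightarrow> nat \<Rightarrow> int" where
  "crw \<Omega> A (CX X) i = (if i \<in> X then 1 else 0)"
| "crw \<Omega> A CA i = (if i \<in> A then -1 else 0)"
| "crw \<Omega> A CO i = (if i \<in> \<Omega> then -1 else 0)"
| "crw \<Omega> A (CP y) i = (if i = y then -1 else 0)"

fun cb :: "(nat set \<Rightarrow> real) \<Rightarrow> nat set \<Rightarrow> cn \<Rightarrow> real" where
  "cb \<upsilon> A (CX X) = \<upsilon> X" | "cb \<upsilon> A CA = - \<upsilon> A" | "cb \<upsilon> A CO = -1" | "cb \<upsilon> A (CP y) = 0"

definition cJ :: "nat set \<Rightarrow> nat set set \<Rightarrow> cn set" where
  "cJ \<Omega> \<Sigma> = CX ` \<Sigma> \<union> CP ` \<Omega> \<union> {CA, CO}"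

lemma cJ_sum:
  fixes g :: "cn \<Rightarrow> 'b::comm_monoid_add"
  assumes "finite \<Omega>" "finite \<Sigma>"
  shows "(\<Sum>j\<in>cJ \<Omega> \<Sigma>. g j) = (\<Sum>X\<in>\<Sigma>. g (CX X)) + (\<Sum>y\<in>\<Omega>. g (CP y)) + g CA + g CO"
proof -
  have "(\<Sum>j\<in>cJ \<Omega> \<Sigma>. g j) = (\<Sum>j\<in>CX ` \<Sigma> \<union> CP ` \<Omega>. g j) + (\<Sum>j\<in>{CA, CO}. g j)"
    unfolding cJ_def using assms by (intro sum.union_disjoint) auto
  also have "(\<Sum>j\<in>CX ` \<Sigma> \<union> CP ` \<Omega>. g j) = (\<Sum>j\<in>CX ` \<Sigma>. g j) + (\<Sum>j\<in>CP ` \<Omega>. g j)"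
    using assms by (intro sum.union_disjoint) auto
  also have "(\<Sum>j\<in>CX ` \<Sigma>. g j) = (\<Sum>X\<in>\<Sigma>. g (CX X))" by (subst sum.reindex) (auto simp: inj_on_def)
  also have "(\<Sum>j\<in>CP ` \<Omega>. g j) = (\<Sum>y\<in>\<Omega>. g (CP y))" by (subst sum.reindex) (auto simp: inj_on_def)
  finally show ?thesis by (simp add: add.assoc)
qed

lemma sum_ind_real:
  fixes p :: "nat \<Rightarrow> real"
  assumes "finite \<Omega>" "X \<subseteq> \<Omega>"
  shows "(\<Sum>i\<in>\<Omega>. real_of_int (if i \<in> X then c else 0) * p i) = real_of_int c * (\<Sum>i\<in>X. p i)"
proof -
  have "(\<Sum>i\<in>\<Omega>. real_of_int (if i \<in> X then c else 0) * p i) = (\<Sum>i\<in>\<Omega>. if i \<in> X then real_of_int c * p i else 0)"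
    by (intro sum.cong) auto
  also have "\<dots> = (\<Sum>i\<in>\<Omega> \<inter> X. real_of_int c * p i)" using assms by (simp add: sum.inter_restrict)
  also have "\<Omega> \<inter> X = X" using assms by auto
  finally show ?thesis by (simp add: sum_distrib_left)
qed

definition Bnd :: "nat \<Rightarrow> nat" where "Bnd N = 2^N * fmF N 1 + fmF N 1"

lemma feas:
  fixes \<Omega> :: "nat set" and \<Sigma> and \<upsilon> :: "nat set \<Rightarrow> real"
  assumes fin: "finite \<Omega>" and alg: "algebra \<Omega> \<Sigma>" and A: "A \<in> \<Sigma>" and u1: "\<upsilon> \<Omega> = 1"
  and hc: "\<forall>m n k. m \<le> Bnd (card \<Omega>) \<longrightarrow> n \<le> Bnd (card \<Omega>) \<longrightarrow> k \<le> Bnd (card \<Omega>) \<longrightarrow>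
          (\<forall>A (As :: nat \<Rightarrow> nat set). A \<in> \<Sigma> \<longrightarrow> (\<forall>i\<in>{1..m}. As i \<in> \<Sigma>) \<longrightarrow>
             nk_cover n k m As A \<Omega> \<longrightarrow>
             real k + real n * \<upsilon> A \<le> (\<Sum>i=1..m. \<upsilon> (As i)))"
  shows "\<exists>p. (\<forall>x\<in>\<Omega>. 0 \<le> p x) \<and> (\<Sum>x\<in>\<Omega>. p x) = 1 \<and> (\<forall>X\<in>\<Sigma>. (\<Sum>x\<in>X. p x) \<le> \<upsilon> X) \<and> \<upsilon> A \<le> (\<Sum>x\<in>A. p x)"
proof -
  interpret algebra \<Omega> \<Sigma> by fact
  have sub: "\<Sigma> \<subseteq> Pow \<Omega>" using sets_into_space by auto
  have finS: "finite \<Sigma>" using sub fin by (meson finite_Pow_iff finite_subset)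
  have cardS: "card \<Sigma> \<le> 2 ^ card \<Omega>" using card_mono[OF _ sub] fin by (simp add: card_Pow)
  have AO: "A \<subseteq> \<Omega>" using A sets_into_space by auto
  let ?J = "cJ \<Omega> \<Sigma>"
  let ?rw = "crw \<Omega> A"
  let ?b = "cb \<upsilon> A"
  have finJ: "finite ?J" by (simp add: cJ_def fin finS)
  define dl where "dl (j::cn) = (\<lambda>j'::cn. if j' = j then (1::nat) else 0)" for j
  define S where "S = dl ` ?J"
  have coef_dl: "fm_coef ?J ?rw (dl j) i = ?rw j i" if "j \<in> ?J" for j i
  proof -
    have "fm_coef ?J ?rw (dl j) i = (\<Sum>j'\<in>?J. if j' = j then ?rw j' i else 0)"
      unfolding fm_coef_def dl_def by (intro sum.cong) auto
    then show ?thesis using finJ that by simp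
  qed
  have rhs_dl: "fm_rhs ?J b (dl j) = b j" if "j \<in> ?J" for j b
  proof -
    have "fm_rhs ?J b (dl j) = (\<Sum>j'\<in>?J. if j' = j then b j' else 0)"
      unfolding fm_rhs_def dl_def by (intro sum.cong) auto
    then show ?thesis using finJ that by simp
  qed
  have lhs_dl: "fm_lhs ?J ?rw \<Omega> (dl j) p = (\<Sum>i\<in>\<Omega>. real_of_int (?rw j i) * p i)" if "j \<in> ?J" for j p
    unfolding fm_lhs_def using coef_dl[OF that] by simp
  have rw0: "?rw j i = 0" if "j \<in> ?J" "i \<notin> \<Omega>" for j i
    using that sub AO by (cases j) (auto simp: cJ_def)
  have rwb: "\<bar>?rw j i\<bar> \<le> 1" for j i by (cases j) auto
  have prem1: "finite S" using finJ by (simp add: S_def)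
  have prem2: "\<forall>l\<in>S. \<forall>i. i \<notin> \<Omega> \<longrightarrow> fm_coef ?J ?rw l i = 0"
    using rw0 coef_dl by (auto simp: S_def)
  have prem3: "\<forall>l\<in>S. \<forall>j. l j \<le> 1" by (auto simp: S_def dl_def)
  have prem4: "\<forall>l\<in>S. \<forall>i. \<bar>fm_coef ?J ?rw l i\<bar> \<le> int 1" using rwb coef_dl by (auto simp: S_def)
  obtain L where L: "\<forall>l\<in>L. (\<forall>i. fm_coef ?J ?rw l i = 0) \<and> (\<forall>j. l j \<le> fmF (card \<Omega>) 1)"
    and Leq: "\<And>b. (\<exists>p. \<forall>l\<in>S. fm_lhs ?J ?rw \<Omega> l p \<le> fm_rhs ?J b l) \<longleftrightarrow> (\<forall>l\<in>L. 0 \<le> fm_rhs ?J b l)"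
    using fm_main[OF fin prem1 prem2 prem3 prem4] by blast
  have "\<forall>l\<in>L. 0 \<le> fm_rhs ?J ?b l"
  proof
    fix l assume l: "l \<in> L"
    define E where "E = fmF (card \<Omega>) 1"
    have lz: "\<And>i. fm_coef ?J ?rw l i = 0" and lb: "\<And>j. l j \<le> E" using L l by (auto simp: E_def)
    obtain As m where m: "m = (\<Sum>X\<in>\<Sigma>. l (CX X))" and AsS: "\<forall>i\<in>{1..m}. As i \<in> \<Sigma>"
      and gs: "\<forall>g::nat set\<Rightarrow>real. (\<Sum>i=1..m. g (As i)) = (\<Sum>X\<in>\<Sigma>. real (l (CX X)) * g X)"
      and cnt: "\<forall>P. card {i\<in>{1..m}. P (As i)} = (\<Sum>X\<in>{X\<in>\<Sigma>. P X}. l (CX X))"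
      using enum_multiset[OF finS, of "\<lambda>X. l (CX X)"] by blast
    have "m \<le> (\<Sum>X\<in>\<Sigma>. E)" unfolding m using lb by (intro sum_mono) auto
    also have "\<dots> = card \<Sigma> * E" by simp
    also have "\<dots> \<le> 2 ^ card \<Omega> * E" using cardS by simp
    finally have mb: "m \<le> Bnd (card \<Omega>)" by (simp add: Bnd_def E_def)
    have nb: "l CA \<le> Bnd (card \<Omega>)" "l CO \<le> Bnd (card \<Omega>)" using lb[of CA] lb[of CO] by (auto simp: Bnd_def E_def)
    have key: "int (card {i\<in>{1..m}. x \<in> As i}) = int (l CO) + int (l CA) * (if x \<in> A then 1 else 0) + int (l (CP x))"
      if x: "x \<in> \<Omega>" for x
    proof -
      have s1: "(\<Sum>X\<in>\<Sigma>. int (l (CX X)) * ?rw (CX X) x) = int (card {i\<in>{1..m}. x \<in> As i})"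
      proof -
        have "(\<Sum>X\<in>\<Sigma>. int (l (CX X)) * ?rw (CX X) x) = (\<Sum>X\<in>\<Sigma>. if x \<in> X then int (l (CX X)) else 0)"
          by (intro sum.cong) auto
        also have "\<dots> = int (\<Sum>X\<in>{X\<in>\<Sigma>. x \<in> X}. l (CX X))" using finS by (simp add: sum.inter_filter of_nat_sum) (intro sum.cong, auto)
        finally show ?thesis using cnt by simp
      qed
      have s2: "(\<Sum>y\<in>\<Omega>. int (l (CP y)) * ?rw (CP y) x) = - int (l (CP x))"
      proof -
        have "(\<Sum>y\<in>\<Omega>. int (l (CP y)) * ?rw (CP y) x) = (\<Sum>y\<in>\<Omega>. if y = x then - int (l (CP y)) else 0)"
          by (intro sum.cong) auto
        then show ?thesis using fin x by simp
      qed
      have "0 = fm_coef ?J ?rw l x" using lz by simp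
      also have "\<dots> = (\<Sum>X\<in>\<Sigma>. int (l (CX X)) * ?rw (CX X) x) + (\<Sum>y\<in>\<Omega>. int (l (CP y)) * ?rw (CP y) x)
          + int (l CA) * ?rw CA x + int (l CO) * ?rw CO x"
        unfolding fm_coef_def by (rule cJ_sum[OF fin finS])
      finally show ?thesis using s1 s2 x by (auto split: if_splits)
    qed
    have cov: "nk_cover (l CA) (l CO) m As A \<Omega>"
      unfolding nk_cover_def covers_times_def
    proof (intro conjI ballI)
      fix x assume "x \<in> \<Omega>"
      from key[OF this] show "l CO \<le> card {i\<in>{1..m}. x \<in> As i}" by (cases "x \<in> A"; simp; linarith)
    next
      fix x assume "x \<in> A"
      with AO have "x \<in> \<Omega>" by auto
      from key[OF this] \<open>x \<in> A\<close> show "l CA + l CO \<le> card {i\<in>{1..m}. x \<in> As i}" by simp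
    qed
    have ineq: "real (l CO) + real (l CA) * \<upsilon> A \<le> (\<Sum>X\<in>\<Sigma>. real (l (CX X)) * \<upsilon> X)"
      using hc mb nb A AsS cov gs by metis
    have "fm_rhs ?J ?b l = (\<Sum>X\<in>\<Sigma>. real (l (CX X)) * ?b (CX X)) + (\<Sum>y\<in>\<Omega>. real (l (CP y)) * ?b (CP y))
          + real (l CA) * ?b CA + real (l CO) * ?b CO"
      unfolding fm_rhs_def by (rule cJ_sum[OF fin finS])
    also have "\<dots> = (\<Sum>X\<in>\<Sigma>. real (l (CX X)) * \<upsilon> X) - real (l CA) * \<upsilon> A - real (l CO)" by simp
    finally show "0 \<le> fm_rhs ?J ?b l" using ineq by simp
  qed
  then obtain p where p: "\<forall>l\<in>S. fm_lhs ?J ?rw \<Omega> l p \<le> fm_rhs ?J ?b l" using Leq by blast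
  have pj: "(\<Sum>i\<in>\<Omega>. real_of_int (?rw j i) * p i) \<le> ?b j" if "j \<in> ?J" for j
    using p that lhs_dl rhs_dl by (auto simp: S_def)
  show ?thesis
  proof (intro exI conjI ballI)
    fix x assume x: "x \<in> \<Omega>"
    have "(\<Sum>i\<in>\<Omega>. real_of_int (?rw (CP x) i) * p i) = (\<Sum>i\<in>\<Omega>. real_of_int (if i \<in> {x} then -1 else 0) * p i)"
      by (intro sum.cong) auto
    also have "\<dots> = - p x" using sum_ind_real[OF fin, of "{x}" "-1" p] x by simp
    finally show "0 \<le> p x" using pj[of "CP x"] x by (simp add: cJ_def)
  next
    fix X assume X: "X \<in> \<Sigma>"
    have "(\<Sum>i\<in>\<Omega>. real_of_int (?rw (CX X) i) * p i) = (\<Sum>i\<in>X. p i)"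
      using sum_ind_real[OF fin, of X 1 p] X sub by auto
    then show "(\<Sum>x\<in>X. p x) \<le> \<upsilon> X" using pj[of "CX X"] X by (simp add: cJ_def)
  next
    have "(\<Sum>i\<in>\<Omega>. real_of_int (?rw (CX \<Omega>) i) * p i) = (\<Sum>i\<in>\<Omega>. p i)"
      using sum_ind_real[OF fin, of \<Omega> 1 p] by auto
    then have 1: "(\<Sum>i\<in>\<Omega>. p i) \<le> 1" using pj[of "CX \<Omega>"] u1 by (simp add: cJ_def)
    have "(\<Sum>i\<in>\<Omega>. real_of_int (?rw CO i) * p i) = - (\<Sum>i\<in>\<Omega>. p i)"
      using sum_ind_real[OF fin, of \<Omega> "-1" p] by auto
    then have 2: "1 \<le> (\<Sum>i\<in>\<Omega>. p i)" using pj[of CO] by (simp add: cJ_def)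
    from 1 2 show "(\<Sum>x\<in>\<Omega>. p x) = 1" by simp
  next
    have "(\<Sum>i\<in>\<Omega>. real_of_int (?rw CA i) * p i) = - (\<Sum>i\<in>A. p i)"
      using sum_ind_real[OF fin AO, of "-1" p] by auto
    then show "\<upsilon> A \<le> (\<Sum>x\<in>A. p x)" using pj[of CA] by (simp add: cJ_def)
  qed
qed

theorem theorem2:
  "\<exists>B :: nat \<Rightarrow> nat. \<forall>(\<Omega> :: nat set) (\<Sigma> :: nat set set) (\<upsilon> :: nat set \<Rightarrow> real).
     finite \<Omega> \<longrightarrow> algebra \<Omega> \<Sigma> \<longrightarrow>
     ((\<exists>P. (\<forall>\<mu>\<in>P. prob_measure_on \<Omega> \<Sigma> \<mu>) \<and> P \<noteq> {} \<and>
           (\<forall>X\<in>\<Sigma>. \<upsilon> X = (SUP \<mu>\<in>P. \<mu> X)))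
      \<longleftrightarrow>
      (\<upsilon> {} = 0 \<and> \<upsilon> \<Omega> = 1 \<and>
       (\<forall>m n k. m \<le> B (card \<Omega>) \<longrightarrow> n \<le> B (card \<Omega>) \<longrightarrow> k \<le> B (card \<Omega>) \<longrightarrow>
          (\<forall>A (As :: nat \<Rightarrow> nat set). A \<in> \<Sigma> \<longrightarrow> (\<forall>i\<in>{1..m}. As i \<in> \<Sigma>) \<longrightarrow>
             nk_cover n k m As A \<Omega> \<longrightarrow>
             real k + real n * \<upsilon> A \<le> (\<Sum>i=1..m. \<upsilon> (As i))))))"
proof (intro exI[of _ Bnd] allI impI iffI)
  fix \<Omega> :: "nat set" and \<Sigma> and \<upsilon> :: "nat set \<Rightarrow> real"
  assume fin: "finite \<Omega>" and alg: "algebra \<Omega> \<Sigma>"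
  interpret algebra \<Omega> \<Sigma> by fact
  {
    assume "\<exists>P. (\<forall>\<mu>\<in>P. prob_measure_on \<Omega> \<Sigma> \<mu>) \<and> P \<noteq> {} \<and> (\<forall>X\<in>\<Sigma>. \<upsilon> X = (SUP \<mu>\<in>P. \<mu> X))"
    then obtain P where P: "\<forall>\<mu>\<in>P. prob_measure_on \<Omega> \<Sigma> \<mu>" "P \<noteq> {}" "\<forall>X\<in>\<Sigma>. \<upsilon> X = (SUP \<mu>\<in>P. \<mu> X)"
      by blast
    have bdd: "bdd_above ((\<lambda>\<mu>. \<mu> X) ` P)" if "X \<in> \<Sigma>" for X
      using P(1) that by (intro bdd_aboveI2[of _ _ 1]) (auto simp: prob_measure_on_def)
    have le: "\<mu> X \<le> \<upsilon> X" if "X \<in> \<Sigma>" "\<mu> \<in> P" for X \<mu>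
      using P(3) that cSUP_upper[OF that(2) bdd[OF that(1)]] by simp
    have "\<upsilon> {} = (SUP \<mu>\<in>P. \<mu> {})" using P(3) by simp
    also have "\<dots> = (SUP \<mu>\<in>P. 0::real)" using P(1) by (intro SUP_cong) (auto simp: prob_measure_on_def)
    also have "\<dots> = 0" using P(2) by simp
    finally have e0: "\<upsilon> {} = 0" .
    have "\<upsilon> \<Omega> = (SUP \<mu>\<in>P. \<mu> \<Omega>)" using P(3) by simp
    also have "\<dots> = (SUP \<mu>\<in>P. 1::real)" using P(1) by (intro SUP_cong) (auto simp: prob_measure_on_def)
    also have "\<dots> = 1" using P(2) by simp
    finally have e1: "\<upsilon> \<Omega> = 1" .
    have cv: "real k + real n * \<upsilon> A \<le> (\<Sum>i=1..m. \<upsilon> (As i))"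
      if A: "A \<in> \<Sigma>" and As: "\<forall>i\<in>{1..m}. As i \<in> \<Sigma>" and cov: "nk_cover n k m As A \<Omega>"
      for m n k A and As :: "nat \<Rightarrow> nat set"
    proof -
      define R where "R = (\<Sum>i=1..m. \<upsilon> (As i))"
      have each: "real k + real n * \<mu> A \<le> R" if mu: "\<mu> \<in> P" for \<mu>
      proof -
        obtain w where w: "\<forall>x\<in>\<Omega>. 0 \<le> w x" "\<forall>X\<in>\<Sigma>. \<mu> X = (\<Sum>x\<in>X. w x)"
          using atoms_weights[OF alg fin] P(1) mu by blast
        have w1: "(\<Sum>x\<in>\<Omega>. w x) = 1" using w(2) P(1) mu by (auto simp: prob_measure_on_def)
        have AO: "A \<subseteq> \<Omega>" using A sets_into_space by auto
        have AsO: "\<forall>i\<in>{1..m}. As i \<subseteq> \<Omega>" using As sets_into_space by auto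
        have "real k + real n * \<mu> A = real k + real n * (\<Sum>x\<in>A. w x)" using w(2) A by simp
        also have "\<dots> \<le> (\<Sum>i=1..m. \<Sum>x\<in>As i. w x)" by (rule weight_cover[OF fin w(1) w1 AO AsO cov])
        also have "\<dots> = (\<Sum>i=1..m. \<mu> (As i))" using w(2) As by (intro sum.cong) auto
        also have "\<dots> \<le> R" unfolding R_def using le As mu by (intro sum_mono) auto
        finally show ?thesis .
      qed
      show ?thesis
      proof (cases "n = 0")
        case True
        obtain \<mu> where "\<mu> \<in> P" using P(2) by blast
        then show ?thesis using each True by (simp add: R_def)
      next
        case False
        have "\<upsilon> A = (SUP \<mu>\<in>P. \<mu> A)" using P(3) A by simp
        also have "\<dots> \<le> (R - real k) / real n"
        proof (rule cSUP_least[OF P(2)])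
          fix \<mu> assume "\<mu> \<in> P"
          then have "real n * \<mu> A \<le> R - real k" using each[of \<mu>] by simp
          then show "\<mu> A \<le> (R - real k) / real n" using False by (simp add: pos_le_divide_eq mult.commute)
        qed
        finally have "real n * \<upsilon> A \<le> R - real k" using False by (simp add: pos_le_divide_eq mult.commute)
        then show ?thesis by (simp add: R_def)
      qed
    qed
    show "\<upsilon> {} = 0 \<and> \<upsilon> \<Omega> = 1 \<and>
       (\<forall>m n k. m \<le> Bnd (card \<Omega>) \<longrightarrow> n \<le> Bnd (card \<Omega>) \<longrightarrow> k \<le> Bnd (card \<Omega>) \<longrightarrow>
          (\<forall>A (As :: nat \<Rightarrow> nat set). A \<in> \<Sigma> \<longrightarrow> (\<forall>i\<in>{1..m}. As i \<in> \<Sigma>) \<longrightarrow>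
             nk_cover n k m As A \<Omega> \<longrightarrow>
             real k + real n * \<upsilon> A \<le> (\<Sum>i=1..m. \<upsilon> (As i))))"
      using e0 e1 cv by blast
  }
  {
    assume H: "\<upsilon> {} = 0 \<and> \<upsilon> \<Omega> = 1 \<and>
       (\<forall>m n k. m \<le> Bnd (card \<Omega>) \<longrightarrow> n \<le> Bnd (card \<Omega>) \<longrightarrow> k \<le> Bnd (card \<Omega>) \<longrightarrow>
          (\<forall>A (As :: nat \<Rightarrow> nat set). A \<in> \<Sigma> \<longrightarrow> (\<forall>i\<in>{1..m}. As i \<in> \<Sigma>) \<longrightarrow>
             nk_cover n k m As A \<Omega> \<longrightarrow>
             real k + real n * \<upsilon> A \<le> (\<Sum>i=1..m. \<upsilon> (As i))))"
    have "\<forall>A\<in>\<Sigma>. \<exists>p. (\<forall>x\<in>\<Omega>. 0 \<le> p x) \<and> (\<Sum>x\<in>\<Omega>. p x) = 1 \<and> (\<forall>X\<in>\<Sigma>. (\<Sum>x\<in>X. p x) \<le> \<upsilon> X) \<and> \<upsilon> A \<le> (\<Sum>x\<in>A. p x)"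
      using feas[OF fin alg _ _] H by blast
    then obtain pf where pf: "\<And>A. A \<in> \<Sigma> \<Longrightarrow> (\<forall>x\<in>\<Omega>. 0 \<le> pf A x) \<and> (\<Sum>x\<in>\<Omega>. pf A x) = 1 \<and>
        (\<forall>X\<in>\<Sigma>. (\<Sum>x\<in>X. pf A x) \<le> \<upsilon> X) \<and> \<upsilon> A \<le> (\<Sum>x\<in>A. pf A x)"
      by metis
    define f where "f A = (\<lambda>X. \<Sum>x\<in>X. pf A x)" for A
    have finX: "finite X" if "X \<in> \<Sigma>" for X using that sets_into_space fin finite_subset by blast
    have pm: "prob_measure_on \<Omega> \<Sigma> (f A)" if A: "A \<in> \<Sigma>" for A
      unfolding prob_measure_on_def
    proof (intro conjI ballI impI)
      fix X assume X: "X \<in> \<Sigma>"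
      show "0 \<le> f A X" using pf[OF A] X sets_into_space unfolding f_def by (intro sum_nonneg) auto
      have "f A X \<le> (\<Sum>x\<in>\<Omega>. pf A x)" unfolding f_def
        using pf[OF A] X sets_into_space fin by (intro sum_mono2) auto
      then show "f A X \<le> 1" using pf[OF A] by simp
      fix Y assume Y: "Y \<in> \<Sigma>" and "X \<inter> Y = {}"
      then show "f A (X \<union> Y) = f A X + f A Y" unfolding f_def using finX X Y by (simp add: sum.union_disjoint)
    next
      show "f A {} = 0" by (simp add: f_def)
      show "f A \<Omega> = 1" using pf[OF A] by (simp add: f_def)
    qed
    show "\<exists>P. (\<forall>\<mu>\<in>P. prob_measure_on \<Omega> \<Sigma> \<mu>) \<and> P \<noteq> {} \<and> (\<forall>X\<in>\<Sigma>. \<upsilon> X = (SUP \<mu>\<in>P. \<mu> X))"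
    proof (intro exI[of _ "f ` \<Sigma>"] conjI ballI)
      show "\<And>\<mu>. \<mu> \<in> f ` \<Sigma> \<Longrightarrow> prob_measure_on \<Omega> \<Sigma> \<mu>" using pm by auto
      show "f ` \<Sigma> \<noteq> {}" by auto
      fix X assume X: "X \<in> \<Sigma>"
      have eq: "f X X = \<upsilon> X" using pf[OF X] X unfolding f_def by (meson order_antisym)
      have "(SUP \<mu>\<in>f ` \<Sigma>. \<mu> X) = Sup ((\<lambda>A. f A X) ` \<Sigma>)" by (simp add: image_image)
      also have "\<dots> = \<upsilon> X"
      proof (rule cSup_eq_maximum)
        show "\<upsilon> X \<in> (\<lambda>A. f A X) ` \<Sigma>" using eq X by (metis image_eqI)
        fix y assume "y \<in> (\<lambda>A. f A X) ` \<Sigma>"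
        then show "y \<le> \<upsilon> X" using pf X unfolding f_def by auto
      qed
      finally show "\<upsilon> X = (SUP \<mu>\<in>f ` \<Sigma>. \<mu> X)" by simp
    qed
  }
qed

end
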